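(* Let $T=(\{T_g\}_{g\in G},\{\gamma_{g,h}\}_{g,h\in G},u)$ be an action of a group $G$ on a semigroupal category $\mathcal{C}$, let $\mathcal{I}$ be an ideal of $\mathcal{C}$, and for each $g\in G$ put $\mathcal{C}_g=\mathcal{I}\cap\overline{T_g(\mathcal{I})}$. Then $\overline{T_g(\mathcal{C}_{g^{-1}})}=\mathcal{C}_g$ for all $g\in G$.
   Context: A semigroupal category is a (strict) category with a tensor product functor and associator satisfying the pentagon axiom. An action of a group $G$ (unit $e$) on $\mathcal{C}$ consists of semigroupal auto-equivalences $T_g$ of $\mathcal{C}$, natural isomorphisms of semigroupal functors $\gamma_{g,h}\colon T_gT_h\Rightarrow T_{gh}$ and $u\colon\mathrm{Id}_{\mathcal{C}}\Rightarrow T_e$, with $(\gamma_{gh,k})_X\circ(\gamma_{g,h})_{T_k(X)}=(\gamma_{g,hk})_X\circ T_g((\gamma_{h,k})_X)$, and with $u_{T_g(X)}$, $(\gamma_{e,g})_X$ mutually inverse and $T_g(u_X)$, $(\gamma_{g,e})_X$ mutually inverse. For a subcategory $\mathcal{D}$, $\overline{\mathcal{D}}$ denotes the smallest subcategory of $\mathcal{C}$ containing $\mathcal{D}$ and closed under isomorphisms. An ideal of $\mathcal{C}$ is a subcategory closed under isomorphisms such that $X\otimes Y$ and $Y\otimes X$ are objects of it whenever $X$ is an object of it and $Y$ is any object of $\mathcal{C}$. *)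

theory Defs
  imports "HOL-Algebra.Group"
begin

record ('o, 'm) cat =
  Obj  :: "'o set"
  Arr  :: "'m set"
  cdom :: "'m \<Rightarrow> 'o"
  ccod :: "'m \<Rightarrow> 'o"
  cmp  :: "'m \<Rightarrow> 'm \<Rightarrow> 'm"   (* cmp C g f = g \<circ> f *)
  idt  :: "'o \<Rightarrow> 'm"

definition homs :: "('o, 'm, 'z) cat_scheme \<Rightarrow> 'o \<Rightarrow> 'o \<Rightarrow> 'm set" where
  "homs C X Y = {f \<in> Arr C. cdom C f = X \<and> ccod C f = Y}"

definition is_category :: "('o, 'm, 'z) cat_scheme \<Rightarrow> bool" where
  "is_category C \<longleftrightarrow>
     (\<forall>f\<in>Arr C. cdom C f \<in> Obj C \<and> ccod C f \<in> Obj C) \<and>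
     (\<forall>X\<in>Obj C. idt C X \<in> homs C X X) \<and>
     (\<forall>f\<in>Arr C. \<forall>g\<in>Arr C. ccod C f = cdom C g \<longrightarrow>
        cmp C g f \<in> homs C (cdom C f) (ccod C g)) \<and>
     (\<forall>f\<in>Arr C. cmp C f (idt C (cdom C f)) = f \<and> cmp C (idt C (ccod C f)) f = f) \<and>
     (\<forall>f\<in>Arr C. \<forall>g\<in>Arr C. \<forall>h\<in>Arr C. ccod C f = cdom C g \<longrightarrow> ccod C g = cdom C h \<longrightarrow>
        cmp C h (cmp C g f) = cmp C (cmp C h g) f)"

definition inverse_pair :: "('o, 'm, 'z) cat_scheme \<Rightarrow> 'm \<Rightarrow> 'm \<Rightarrow> bool" where
  "inverse_pair C f g \<longleftrightarrow> f \<in> Arr C \<and> g \<in> Arr C \<and>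
     cdom C g = ccod C f \<and> ccod C g = cdom C f \<and>
     cmp C g f = idt C (cdom C f) \<and> cmp C f g = idt C (ccod C f)"

definition iso_arr :: "('o, 'm, 'z) cat_scheme \<Rightarrow> 'm \<Rightarrow> bool" where
  "iso_arr C f \<longleftrightarrow> (\<exists>g. inverse_pair C f g)"

definition isomorphic :: "('o, 'm, 'z) cat_scheme \<Rightarrow> 'o \<Rightarrow> 'o \<Rightarrow> bool" where
  "isomorphic C X Y \<longleftrightarrow> (\<exists>f. f \<in> homs C X Y \<and> iso_arr C f)"

definition endofunctor :: "('o, 'm, 'z) cat_scheme \<Rightarrow> ('o \<Rightarrow> 'o) \<Rightarrow> ('m \<Rightarrow> 'm) \<Rightarrow> bool" where
  "endofunctor C Fo Fm \<longleftrightarrow>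
     (\<forall>X\<in>Obj C. Fo X \<in> Obj C) \<and>
     (\<forall>f\<in>Arr C. Fm f \<in> homs C (Fo (cdom C f)) (Fo (ccod C f))) \<and>
     (\<forall>X\<in>Obj C. Fm (idt C X) = idt C (Fo X)) \<and>
     (\<forall>f\<in>Arr C. \<forall>g\<in>Arr C. ccod C f = cdom C g \<longrightarrow> Fm (cmp C g f) = cmp C (Fm g) (Fm f))"

definition nat_iso :: "('o, 'm, 'z) cat_scheme \<Rightarrow> ('o \<Rightarrow> 'o) \<Rightarrow> ('m \<Rightarrow> 'm)
     \<Rightarrow> ('o \<Rightarrow> 'o) \<Rightarrow> ('m \<Rightarrow> 'm) \<Rightarrow> ('o \<Rightarrow> 'm) \<Rightarrow> bool" where
  "nat_iso C Fo Fm Go Gm \<eta> \<longleftrightarrow>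
     (\<forall>X\<in>Obj C. \<eta> X \<in> homs C (Fo X) (Go X) \<and> iso_arr C (\<eta> X)) \<and>
     (\<forall>f\<in>Arr C. cmp C (\<eta> (ccod C f)) (Fm f) = cmp C (Gm f) (\<eta> (cdom C f)))"

definition is_equivalence :: "('o, 'm, 'z) cat_scheme \<Rightarrow> ('o \<Rightarrow> 'o) \<Rightarrow> ('m \<Rightarrow> 'm) \<Rightarrow> bool" where
  "is_equivalence C Fo Fm \<longleftrightarrow> endofunctor C Fo Fm \<and>
     (\<exists>Ho Hm. endofunctor C Ho Hm \<and>
        (\<exists>\<eta>. nat_iso C (Ho \<circ> Fo) (Hm \<circ> Fm) id id \<eta>) \<and>
        (\<exists>\<epsilon>. nat_iso C (Fo \<circ> Ho) (Fm \<circ> Hm) id id \<epsilon>))"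

record ('o, 'm) sgcat = "('o, 'm) cat" +
  tens  :: "'o \<Rightarrow> 'o \<Rightarrow> 'o"
  tensm :: "'m \<Rightarrow> 'm \<Rightarrow> 'm"
  asc   :: "'o \<Rightarrow> 'o \<Rightarrow> 'o \<Rightarrow> 'm"   (* (X\<otimes>Y)\<otimes>Z \<rightarrow> X\<otimes>(Y\<otimes>Z) *)

definition semigroupal_category :: "('o, 'm, 'z) sgcat_scheme \<Rightarrow> bool" where
  "semigroupal_category C \<longleftrightarrow> is_category C \<and>
     (\<forall>X\<in>Obj C. \<forall>Y\<in>Obj C. tens C X Y \<in> Obj C) \<and>
     (\<forall>f\<in>Arr C. \<forall>g\<in>Arr C. tensm C f g \<in>
        homs C (tens C (cdom C f) (cdom C g)) (tens C (ccod C f) (ccod C g))) \<and>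
     (\<forall>X\<in>Obj C. \<forall>Y\<in>Obj C. tensm C (idt C X) (idt C Y) = idt C (tens C X Y)) \<and>
     (\<forall>f\<in>Arr C. \<forall>g\<in>Arr C. \<forall>f'\<in>Arr C. \<forall>g'\<in>Arr C.
        ccod C f = cdom C g \<longrightarrow> ccod C f' = cdom C g' \<longrightarrow>
        tensm C (cmp C g f) (cmp C g' f') = cmp C (tensm C g g') (tensm C f f')) \<and>
     (\<forall>X\<in>Obj C. \<forall>Y\<in>Obj C. \<forall>Z\<in>Obj C.
        asc C X Y Z \<in> homs C (tens C (tens C X Y) Z) (tens C X (tens C Y Z)) \<and>
        iso_arr C (asc C X Y Z)) \<and>
     (\<forall>f\<in>Arr C. \<forall>g\<in>Arr C. \<forall>h\<in>Arr C.
        cmp C (asc C (ccod C f) (ccod C g) (ccod C h)) (tensm C (tensm C f g) h) =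
        cmp C (tensm C f (tensm C g h)) (asc C (cdom C f) (cdom C g) (cdom C h))) \<and>
     (\<forall>W\<in>Obj C. \<forall>X\<in>Obj C. \<forall>Y\<in>Obj C. \<forall>Z\<in>Obj C.
        cmp C (asc C W X (tens C Y Z)) (asc C (tens C W X) Y Z) =
        cmp C (tensm C (idt C W) (asc C X Y Z))
          (cmp C (asc C W (tens C X Y) Z) (tensm C (asc C W X Y) (idt C Z))))"

definition semigroupal_functor :: "('o, 'm, 'z) sgcat_scheme \<Rightarrow> ('o \<Rightarrow> 'o) \<Rightarrow> ('m \<Rightarrow> 'm)
     \<Rightarrow> ('o \<Rightarrow> 'o \<Rightarrow> 'm) \<Rightarrow> bool" where
  "semigroupal_functor C Fo Fm J \<longleftrightarrow> endofunctor C Fo Fm \<and>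
     (\<forall>X\<in>Obj C. \<forall>Y\<in>Obj C. J X Y \<in> homs C (tens C (Fo X) (Fo Y)) (Fo (tens C X Y)) \<and>
        iso_arr C (J X Y)) \<and>
     (\<forall>f\<in>Arr C. \<forall>g\<in>Arr C.
        cmp C (J (ccod C f) (ccod C g)) (tensm C (Fm f) (Fm g)) =
        cmp C (Fm (tensm C f g)) (J (cdom C f) (cdom C g))) \<and>
     (\<forall>X\<in>Obj C. \<forall>Y\<in>Obj C. \<forall>Z\<in>Obj C.
        cmp C (Fm (asc C X Y Z)) (cmp C (J (tens C X Y) Z) (tensm C (J X Y) (idt C (Fo Z)))) =
        cmp C (J X (tens C Y Z)) (cmp C (tensm C (idt C (Fo X)) (J Y Z)) (asc C (Fo X) (Fo Y) (Fo Z))))"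

definition semigroupal_nat_iso :: "('o, 'm, 'z) sgcat_scheme
     \<Rightarrow> ('o \<Rightarrow> 'o) \<Rightarrow> ('m \<Rightarrow> 'm) \<Rightarrow> ('o \<Rightarrow> 'o \<Rightarrow> 'm)
     \<Rightarrow> ('o \<Rightarrow> 'o) \<Rightarrow> ('m \<Rightarrow> 'm) \<Rightarrow> ('o \<Rightarrow> 'o \<Rightarrow> 'm) \<Rightarrow> ('o \<Rightarrow> 'm) \<Rightarrow> bool" where
  "semigroupal_nat_iso C Fo Fm J Go Gm K \<eta> \<longleftrightarrow> nat_iso C Fo Fm Go Gm \<eta> \<and>
     (\<forall>X\<in>Obj C. \<forall>Y\<in>Obj C.
        cmp C (\<eta> (tens C X Y)) (J X Y) = cmp C (K X Y) (tensm C (\<eta> X) (\<eta> Y)))"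

text \<open>Structure map of the composite semigroupal functor \<open>F \<circ> G\<close>.\<close>

definition comp_J :: "('o, 'm, 'z) sgcat_scheme \<Rightarrow> ('m \<Rightarrow> 'm) \<Rightarrow> ('o \<Rightarrow> 'o \<Rightarrow> 'm)
     \<Rightarrow> ('o \<Rightarrow> 'o) \<Rightarrow> ('o \<Rightarrow> 'o \<Rightarrow> 'm) \<Rightarrow> 'o \<Rightarrow> 'o \<Rightarrow> 'm" where
  "comp_J C Fm J Go K X Y = cmp C (Fm (K X Y)) (J (Go X) (Go Y))"

definition id_J :: "('o, 'm, 'z) sgcat_scheme \<Rightarrow> 'o \<Rightarrow> 'o \<Rightarrow> 'm" where
  "id_J C X Y = idt C (tens C X Y)"

definition group_action :: "('o, 'm, 'z) sgcat_scheme \<Rightarrow> ('g, 'b) monoid_scheme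
     \<Rightarrow> ('g \<Rightarrow> 'o \<Rightarrow> 'o) \<Rightarrow> ('g \<Rightarrow> 'm \<Rightarrow> 'm) \<Rightarrow> ('g \<Rightarrow> 'o \<Rightarrow> 'o \<Rightarrow> 'm)
     \<Rightarrow> ('g \<Rightarrow> 'g \<Rightarrow> 'o \<Rightarrow> 'm) \<Rightarrow> ('o \<Rightarrow> 'm) \<Rightarrow> bool" where
  "group_action C G To Tm TJ gam u \<longleftrightarrow>
     semigroupal_category C \<and> group G \<and>
     (\<forall>g\<in>carrier G. semigroupal_functor C (To g) (Tm g) (TJ g) \<and> is_equivalence C (To g) (Tm g)) \<and>
     (\<forall>g\<in>carrier G. \<forall>h\<in>carrier G.
        semigroupal_nat_iso C (To g \<circ> To h) (Tm g \<circ> Tm h) (comp_J C (Tm g) (TJ g) (To h) (TJ h))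
          (To (g \<otimes>\<^bsub>G\<^esub> h)) (Tm (g \<otimes>\<^bsub>G\<^esub> h)) (TJ (g \<otimes>\<^bsub>G\<^esub> h)) (gam g h)) \<and>
     semigroupal_nat_iso C id id (id_J C) (To \<one>\<^bsub>G\<^esub>) (Tm \<one>\<^bsub>G\<^esub>) (TJ \<one>\<^bsub>G\<^esub>) u \<and>
     (\<forall>g\<in>carrier G. \<forall>h\<in>carrier G. \<forall>k\<in>carrier G. \<forall>X\<in>Obj C.
        cmp C (gam (g \<otimes>\<^bsub>G\<^esub> h) k X) (gam g h (To k X)) =
        cmp C (gam g (h \<otimes>\<^bsub>G\<^esub> k) X) (Tm g (gam h k X))) \<and>
     (\<forall>g\<in>carrier G. \<forall>X\<in>Obj C.
        inverse_pair C (u (To g X)) (gam \<one>\<^bsub>G\<^esub> g X) \<and>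
        inverse_pair C (Tm g (u X)) (gam g \<one>\<^bsub>G\<^esub> X))"

section \<open>Ideals and isomorphism closures (full subcategories, given by object classes)\<close>

definition cat_ideal :: "('o, 'm, 'z) sgcat_scheme \<Rightarrow> 'o set \<Rightarrow> bool" where
  "cat_ideal C I \<longleftrightarrow> I \<subseteq> Obj C \<and>
     (\<forall>X\<in>I. \<forall>Y\<in>Obj C. isomorphic C X Y \<longrightarrow> Y \<in> I) \<and>
     (\<forall>X\<in>I. \<forall>Y\<in>Obj C. tens C X Y \<in> I \<and> tens C Y X \<in> I)"

definition iso_closure :: "('o, 'm, 'z) cat_scheme \<Rightarrow> 'o set \<Rightarrow> 'o set" where
  "iso_closure C D = {Y \<in> Obj C. \<exists>X\<in>D. isomorphic C X Y}"

definition piece :: "('o, 'm, 'z) sgcat_scheme \<Rightarrow> 'o set \<Rightarrow> ('o \<Rightarrow> 'o) \<Rightarrow> 'o set" where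
  "piece C I Tg = I \<inter> iso_closure C (Tg ` I)"

end

theory Submission
  imports Defs
begin

lemma cat_facts:
  assumes "is_category C"
  shows cat_dc: "\<And>f. f \<in> Arr C \<Longrightarrow> cdom C f \<in> Obj C \<and> ccod C f \<in> Obj C"
    and cat_id: "\<And>X. X \<in> Obj C \<Longrightarrow> idt C X \<in> homs C X X"
    and cat_cmp: "\<And>f g. f \<in> Arr C \<Longrightarrow> g \<in> Arr C \<Longrightarrow> ccod C f = cdom C g \<Longrightarrow>
        cmp C g f \<in> homs C (cdom C f) (ccod C g)"
    and cat_unit: "\<And>f. f \<in> Arr C \<Longrightarrow> cmp C f (idt C (cdom C f)) = f \<and> cmp C (idt C (ccod C f)) f = f"
    and cat_assoc: "\<And>f g h. f \<in> Arr C \<Longrightarrow> g \<in> Arr C \<Longrightarrow> h \<in> Arr C \<Longrightarrow> ccod C f = cdom C g \<Longrightarrow> ccod C g = cdom C h \<Longrightarrow>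
        cmp C h (cmp C g f) = cmp C (cmp C h g) f"
  using assms unfolding is_category_def by blast+

lemma iso_refl:
  assumes "is_category C" "X \<in> Obj C"
  shows "isomorphic C X X"
proof -
  have i: "idt C X \<in> homs C X X" using cat_id[OF assms] .
  hence "cmp C (idt C X) (idt C X) = idt C X"
    using cat_unit[OF assms(1), of "idt C X"] unfolding homs_def by (metis (mono_tags, lifting) mem_Collect_eq)
  hence "inverse_pair C (idt C X) (idt C X)" using i unfolding inverse_pair_def homs_def by auto
  thus ?thesis using i unfolding isomorphic_def iso_arr_def by blast
qed

lemma inverse_pair_sym: "inverse_pair C f g \<Longrightarrow> inverse_pair C g f"
  unfolding inverse_pair_def by auto

lemma iso_sym:
  assumes "isomorphic C X Y" shows "isomorphic C Y X"
proof -
  obtain f g where "f \<in> homs C X Y" "inverse_pair C f g"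
    using assms unfolding isomorphic_def iso_arr_def by blast
  hence "g \<in> homs C Y X" "inverse_pair C g f"
    unfolding homs_def inverse_pair_def by auto
  thus ?thesis unfolding isomorphic_def iso_arr_def by blast
qed

lemma iso_trans:
  assumes C: "is_category C" and "isomorphic C X Y" "isomorphic C Y Z"
  shows "isomorphic C X Z"
proof -
  obtain f f' where f: "f \<in> homs C X Y" "inverse_pair C f f'"
    using assms unfolding isomorphic_def iso_arr_def by blast
  obtain g g' where g: "g \<in> homs C Y Z" "inverse_pair C g g'"
    using assms unfolding isomorphic_def iso_arr_def by blast
  have fa: "f \<in> Arr C" "cdom C f = X" "ccod C f = Y" "f' \<in> Arr C" "cdom C f' = Y" "ccod C f' = X"
    "cmp C f' f = idt C X" "cmp C f f' = idt C Y"
    using f unfolding homs_def inverse_pair_def by auto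
  have ga: "g \<in> Arr C" "cdom C g = Y" "ccod C g = Z" "g' \<in> Arr C" "cdom C g' = Z" "ccod C g' = Y"
    "cmp C g' g = idt C Y" "cmp C g g' = idt C Z"
    using g unfolding homs_def inverse_pair_def by auto
  have gf: "cmp C g f \<in> homs C X Z" using cat_cmp[OF C] fa ga by auto
  have fg: "cmp C f' g' \<in> homs C Z X" using cat_cmp[OF C, of g' f'] fa(4,5,6) ga(4,5,6) by metis
  have gfa: "cmp C g f \<in> Arr C" "ccod C (cmp C g f) = Z" "cdom C (cmp C g f) = X"
    and fga: "cmp C f' g' \<in> Arr C" "ccod C (cmp C f' g') = X" "cdom C (cmp C f' g') = Z"
    using gf fg unfolding homs_def by auto
  have "cmp C (cmp C f' g') (cmp C g f) = cmp C f' (cmp C g' (cmp C g f))"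
    using cat_assoc[OF C, of "cmp C g f" g' f'] gfa fa ga by metis
  also have "cmp C g' (cmp C g f) = cmp C (cmp C g' g) f"
    using cat_assoc[OF C, of f g g'] cat_assoc[OF C, of g' f' f] fa ga by metis
  also have "\<dots> = f" using fa ga cat_unit[OF C] by metis
  finally have e1: "cmp C (cmp C f' g') (cmp C g f) = idt C X" using fa by simp
  have "cmp C (cmp C g f) (cmp C f' g') = cmp C g (cmp C f (cmp C f' g'))"
    using cat_assoc[OF C, of "cmp C f' g'" f g] fga fa ga by metis
  also have "cmp C f (cmp C f' g') = cmp C (cmp C f f') g'"
    using cat_assoc[OF C, of f g g'] cat_assoc[OF C, of g' f' f] fa ga by metis
  also have "\<dots> = g'" using fa ga cat_unit[OF C] by metis
  finally have e2: "cmp C (cmp C g f) (cmp C f' g') = idt C Z" using ga by simp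
  have "inverse_pair C (cmp C g f) (cmp C f' g')"
    using gf fg e1 e2 unfolding inverse_pair_def homs_def by auto
  thus ?thesis using gf unfolding isomorphic_def iso_arr_def by blast
qed

lemma functor_iso:
  assumes C: "is_category C" and F: "endofunctor C Fo Fm" and "isomorphic C X Y"
  shows "isomorphic C (Fo X) (Fo Y)"
proof -
  obtain f f' where f: "f \<in> homs C X Y" "inverse_pair C f f'"
    using assms unfolding isomorphic_def iso_arr_def by blast
  have fa: "f \<in> Arr C" "cdom C f = X" "ccod C f = Y" "f' \<in> Arr C" "cdom C f' = Y" "ccod C f' = X"
    "cmp C f' f = idt C X" "cmp C f f' = idt C Y"
    using f unfolding homs_def inverse_pair_def by auto
  have F1: "\<And>f. f \<in> Arr C \<Longrightarrow> Fm f \<in> homs C (Fo (cdom C f)) (Fo (ccod C f))"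
    and F2: "\<And>X. X \<in> Obj C \<Longrightarrow> Fm (idt C X) = idt C (Fo X)"
    and F3: "\<And>f g. f \<in> Arr C \<Longrightarrow> g \<in> Arr C \<Longrightarrow> ccod C f = cdom C g \<Longrightarrow> Fm (cmp C g f) = cmp C (Fm g) (Fm f)"
    using F unfolding endofunctor_def by blast+
  have XY: "X \<in> Obj C" "Y \<in> Obj C" using cat_dc[OF C] fa by auto
  have "cmp C (Fm f') (Fm f) = idt C (Fo X)" using F3[of f f'] F2 fa XY by simp
  moreover have "cmp C (Fm f) (Fm f') = idt C (Fo Y)" using F3[of f' f] F2 fa XY by simp
  moreover have "Fm f \<in> homs C (Fo X) (Fo Y)" "Fm f' \<in> homs C (Fo Y) (Fo X)" using F1[of f] F1[of f'] fa(1-6) by metis+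
  ultimately have "inverse_pair C (Fm f) (Fm f')" unfolding inverse_pair_def homs_def by auto
  thus ?thesis using \<open>Fm f \<in> homs C (Fo X) (Fo Y)\<close> unfolding isomorphic_def iso_arr_def by blast
qed

lemma natiso_iso:
  assumes "nat_iso C Fo Fm Go Gm \<eta>" "X \<in> Obj C"
  shows "isomorphic C (Fo X) (Go X)"
  using assms unfolding nat_iso_def isomorphic_def by blast

lemma TT_iso:
  assumes A: "group_action C G To Tm TJ gam u"
    and h: "h \<in> carrier G" and k: "k \<in> carrier G" and hk: "h \<otimes>\<^bsub>G\<^esub> k = \<one>\<^bsub>G\<^esub>"
    and X: "X \<in> Obj C"
  shows "isomorphic C X (To h (To k X))"
proof -
  have C: "is_category C" using A unfolding group_action_def semigroupal_category_def by blast
  have "nat_iso C (To h \<circ> To k) (Tm h \<circ> Tm k) (To \<one>\<^bsub>G\<^esub>) (Tm \<one>\<^bsub>G\<^esub>) (gam h k)"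
    using A h k hk unfolding group_action_def semigroupal_nat_iso_def by metis
  hence 1: "isomorphic C (To h (To k X)) (To \<one>\<^bsub>G\<^esub> X)" using natiso_iso X by fastforce
  have "nat_iso C id id (To \<one>\<^bsub>G\<^esub>) (Tm \<one>\<^bsub>G\<^esub>) u"
    using A unfolding group_action_def semigroupal_nat_iso_def by metis
  hence 2: "isomorphic C X (To \<one>\<^bsub>G\<^esub> X)" using natiso_iso X by fastforce
  show ?thesis using iso_trans[OF C 2 iso_sym[OF 1]] .
qed

theorem corollary3p2:
  fixes C :: "('o, 'm) sgcat" and G :: "('g, 'b) monoid_scheme"
  assumes "group_action C G To Tm TJ gam u"
    and "cat_ideal C I"
    and "g \<in> carrier G"
  shows "iso_closure C (To g ` piece C I (To (inv\<^bsub>G\<^esub> g))) = piece C I (To g)"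
proof -
  note A = assms(1)
  have C: "is_category C" using A unfolding group_action_def semigroupal_category_def by blast
  have grp: "group G" using A unfolding group_action_def by blast
  have gi: "inv\<^bsub>G\<^esub> g \<in> carrier G" using grp assms(3) by (simp add: group.inv_closed)
  have e1: "g \<otimes>\<^bsub>G\<^esub> inv\<^bsub>G\<^esub> g = \<one>\<^bsub>G\<^esub>" using grp assms(3) by (simp add: group.r_inv)
  have e2: "inv\<^bsub>G\<^esub> g \<otimes>\<^bsub>G\<^esub> g = \<one>\<^bsub>G\<^esub>" using grp assms(3) by (simp add: group.l_inv)
  have Fg: "endofunctor C (To g) (Tm g)" and Fi: "endofunctor C (To (inv\<^bsub>G\<^esub> g)) (Tm (inv\<^bsub>G\<^esub> g))"
    using A assms(3) gi unfolding group_action_def semigroupal_functor_def by blast+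
  have Og: "\<And>X. X \<in> Obj C \<Longrightarrow> To g X \<in> Obj C" using Fg unfolding endofunctor_def by blast
  have Oi: "\<And>X. X \<in> Obj C \<Longrightarrow> To (inv\<^bsub>G\<^esub> g) X \<in> Obj C" using Fi unfolding endofunctor_def by blast
  have IO: "I \<subseteq> Obj C" and Icl: "\<And>X Y. X \<in> I \<Longrightarrow> Y \<in> Obj C \<Longrightarrow> isomorphic C X Y \<Longrightarrow> Y \<in> I"
    using assms(2) unfolding cat_ideal_def by blast+
  have T1: "\<And>X. X \<in> Obj C \<Longrightarrow> isomorphic C X (To g (To (inv\<^bsub>G\<^esub> g) X))"
    using TT_iso[OF A assms(3) gi e1] .
  have T2: "\<And>X. X \<in> Obj C \<Longrightarrow> isomorphic C X (To (inv\<^bsub>G\<^esub> g) (To g X))"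
    using TT_iso[OF A gi assms(3) e2] .
  show ?thesis
  proof
    show "iso_closure C (To g ` piece C I (To (inv\<^bsub>G\<^esub> g))) \<subseteq> piece C I (To g)"
    proof
      fix Y assume "Y \<in> iso_closure C (To g ` piece C I (To (inv\<^bsub>G\<^esub> g)))"
      then obtain X Z where Y: "Y \<in> Obj C" and X: "X \<in> I" and Z: "Z \<in> I"
        and XZ: "isomorphic C (To (inv\<^bsub>G\<^esub> g) Z) X" and XY: "isomorphic C (To g X) Y"
        unfolding iso_closure_def piece_def by blast
      have ZO: "Z \<in> Obj C" using Z IO by blast
      have "isomorphic C (To g (To (inv\<^bsub>G\<^esub> g) Z)) (To g X)" using functor_iso[OF C Fg XZ] .
      hence "isomorphic C Z (To g X)" using iso_trans[OF C T1[OF ZO]] by blast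
      hence "isomorphic C Z Y" using iso_trans[OF C _ XY] by blast
      hence "Y \<in> I" using Icl Z Y by blast
      thus "Y \<in> piece C I (To g)" using X Y XY unfolding piece_def iso_closure_def by blast
    qed
  next
    show "piece C I (To g) \<subseteq> iso_closure C (To g ` piece C I (To (inv\<^bsub>G\<^esub> g)))"
    proof
      fix Y assume "Y \<in> piece C I (To g)"
      then obtain Z where Y: "Y \<in> I" and Z: "Z \<in> I" and ZY: "isomorphic C (To g Z) Y"
        unfolding iso_closure_def piece_def by blast
      have YO: "Y \<in> Obj C" using Y IO by blast
      define X where "X = To (inv\<^bsub>G\<^esub> g) Y"
      have XO: "X \<in> Obj C" using Oi YO X_def by simp
      have "isomorphic C (To (inv\<^bsub>G\<^esub> g) (To g Z)) X" using functor_iso[OF C Fi ZY] X_def by simp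
      hence "isomorphic C Z X" using iso_trans[OF C T2] Z IO by blast
      hence XI: "X \<in> I" using Icl Z XO by blast
      have "isomorphic C X X" using iso_refl[OF C XO] .
      hence "X \<in> piece C I (To (inv\<^bsub>G\<^esub> g))" using XI Y XO X_def unfolding piece_def iso_closure_def by blast
      moreover have "isomorphic C (To g X) Y" using iso_sym[OF T1[OF YO]] X_def by simp
      ultimately show "Y \<in> iso_closure C (To g ` piece C I (To (inv\<^bsub>G\<^esub> g)))"
        using YO unfolding iso_closure_def by blast
    qed
  qed
qed

end
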